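(* Let $f:\mathbb{R}^n\to\mathbb{R}$ be a differentiable convex function, let $B'\ge B>0$, $\mathbf{x}\in[-B',B']^n$, $\mathbf{x}^*\in[-B,B]^n$ and $0<\lambda\le1$. For $i\in[n]$ define $\zeta_i=\lambda$ if $x_i=0$; $\zeta_i=0$ if $|x_i|\ge B$ and $\nabla_i f(\mathbf{x})\cdot x_i<0$; $\zeta_i=1$ otherwise; and let $i^*\in\arg\max_i\zeta_i|\nabla_i f(\mathbf{x})|$. Then at least one of the following holds: (i) $|\nabla_{i^*}f(\mathbf{x})|\ge\dfrac{f(\mathbf{x})-f(\mathbf{x}^* )}{\|\mathbf{x}^*\|_1+\lambda\|\mathbf{x}\|_1}$; (ii) $|\nabla_{i^*}f(\mathbf{x})|\ge\dfrac{f(\mathbf{x})-f(\mathbf{x}^* )}{\lambda^{-1}\|\mathbf{x}^*\|_1+\|\mathbf{x}\|_1}$ and $x_{i^*}\neq0$. *)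

theory Defs
  imports "HOL-Analysis.Analysis"
begin

definition partial_grad :: "(real^'n \<Rightarrow> real) \<Rightarrow> real^'n \<Rightarrow> 'n \<Rightarrow> real" where
  "partial_grad f x i = frechet_derivative f (at x) (axis i 1)"

definition l1norm :: "real^'n \<Rightarrow> real" where
  "l1norm x = (\<Sum>i\<in>UNIV. \<bar>x $ i\<bar>)"

definition zeta :: "(real^'n \<Rightarrow> real) \<Rightarrow> real \<Rightarrow> real \<Rightarrow> real^'n \<Rightarrow> 'n \<Rightarrow> real" where
  "zeta f B lam x i =
     (if x $ i = 0 then lam
      else if \<bar>x $ i\<bar> \<ge> B \<and> partial_grad f x i * x $ i < 0 then 0
      else 1)"

end

theory Submission
  imports Defs
begin

lemma tangent:
  fixes f :: "'a::real_normed_vector \<Rightarrow> real"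
  assumes cvx: "convex_on UNIV f" and d: "(f has_derivative f') (at x)"
  shows "f y \<ge> f x + f' (y - x)"
proof -
  define h where "h t = f (x + t *\<^sub>R (y - x))" for t :: real
  have lin: "linear f'" using d has_derivative_linear by blast
  have hc: "convex_on UNIV h"
    unfolding convex_on_def h_def
  proof (intro conjI allI impI ballI)
    show "convex (UNIV::real set)" by simp
    fix s t u v :: real assume u: "0 \<le> u" and v: "0 \<le> v" and s1: "u + v = 1"
    have uv: "0 \<le> u \<and> 0 \<le> v \<and> u + v = 1" using u v s1 by simp
    have "x + (u * s + v * t) *\<^sub>R (y - x) = u *\<^sub>R (x + s *\<^sub>R (y - x)) + v *\<^sub>R (x + t *\<^sub>R (y - x))"
    proof -
      have "u *\<^sub>R (x + s *\<^sub>R (y - x)) + v *\<^sub>R (x + t *\<^sub>R (y - x)) = (u + v) *\<^sub>R x + (u * s + v * t) *\<^sub>R (y - x)"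
        by (simp add: algebra_simps)
      then show ?thesis using s1 by simp
    qed
    then show "f (x + (u *\<^sub>R s + v *\<^sub>R t) *\<^sub>R (y - x)) \<le> u * f (x + s *\<^sub>R (y - x)) + v * f (x + t *\<^sub>R (y - x))"
      using cvx uv unfolding convex_on_def by auto
  qed
  have "((\<lambda>t. x + t *\<^sub>R (y - x)) has_derivative (\<lambda>t. t *\<^sub>R (y - x))) (at 0)"
    by (auto intro!: derivative_eq_intros)
  then have "(h has_derivative (\<lambda>t. f' (t *\<^sub>R (y - x)))) (at 0)"
    unfolding h_def using has_derivative_compose[of "\<lambda>t. x + t *\<^sub>R (y - x)" _ 0 UNIV f f'] d by simp
  moreover have "(\<lambda>t. f' (t *\<^sub>R (y - x))) = (\<lambda>t. f' (y - x) * t)"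
    using lin by (simp add: linear_scale mult.commute)
  ultimately have "(h has_field_derivative f' (y - x)) (at 0)"
    by (simp add: has_field_derivative_def)
  then have "h 1 - h 0 \<ge> f' (y - x) * (1 - 0)"
    by (intro convex_on_imp_above_tangent[OF hc]) auto
  then show ?thesis by (simp add: h_def)
qed

lemma div_le_aux:
  fixes D a E :: real
  assumes "D \<le> a * E" "E \<ge> 0" "a \<ge> 0"
  shows "D / E \<le> a"
proof (cases "E = 0")
  case True then show ?thesis using assms by simp
next
  case False then have "E > 0" using assms by simp
  then show ?thesis using assms by (simp add: divide_le_eq)
qed

theorem lemma4:
  fixes f :: "real^'n \<Rightarrow> real" and B B' lam :: real and x xs :: "real^'n" and istar :: 'n
  assumes diff: "\<And>y. f differentiable (at y)"
    and cvx: "convex_on UNIV f"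
    and BB: "B' \<ge> B" "B > 0"
    and xbox: "\<And>i. \<bar>x $ i\<bar> \<le> B'"
    and xsbox: "\<And>i. \<bar>xs $ i\<bar> \<le> B"
    and lam: "0 < lam" "lam \<le> 1"
    and argmax: "\<And>j. zeta f B lam x j * \<bar>partial_grad f x j\<bar>
                       \<le> zeta f B lam x istar * \<bar>partial_grad f x istar\<bar>"
  shows "\<bar>partial_grad f x istar\<bar> \<ge> (f x - f xs) / (l1norm xs + lam * l1norm x)
     \<or> (\<bar>partial_grad f x istar\<bar> \<ge> (f x - f xs) / (inverse lam * l1norm xs + l1norm x)
         \<and> x $ istar \<noteq> 0)"
proof -
  define f' where "f' = frechet_derivative f (at x)"
  define g where "g i = partial_grad f x i" for i
  have d: "(f has_derivative f') (at x)" unfolding f'_def using diff frechet_derivative_works by blast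
  have lin: "linear f'" using d has_derivative_linear by blast
  have exp: "f' v = (\<Sum>i\<in>UNIV. v $ i * g i)" for v
  proof -
    have "f' v = f' (\<Sum>i\<in>UNIV. (v$i) *s axis i 1)" by (simp only: basis_expansion)
    also have "\<dots> = (\<Sum>i\<in>UNIV. f' ((v$i) *s axis i 1))"
      by (rule linear_sum[OF lin])
    also have "\<dots> = (\<Sum>i\<in>UNIV. v $ i * f' (axis i 1))"
      unfolding scalar_mult_eq_scaleR by (intro sum.cong refl) (metis linear_scale[OF lin] real_scaleR_def)
    also have "\<dots> = (\<Sum>i\<in>UNIV. v $ i * g i)"
      unfolding g_def partial_grad_def f'_def ..
    finally show ?thesis .
  qed
  have "f xs \<ge> f x + f' (xs - x)" using tangent[OF cvx d] .
  moreover have "(\<Sum>i\<in>UNIV. g i * (x $ i - xs $ i)) = - (\<Sum>i\<in>UNIV. (xs - x) $ i * g i)"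
  proof -
    have "(\<Sum>i\<in>UNIV. g i * (x $ i - xs $ i)) = (\<Sum>i\<in>UNIV. - ((xs - x) $ i * g i))"
      by (intro sum.cong refl) (simp add: right_diff_distrib mult.commute)
    then show ?thesis by (simp only: sum_negf)
  qed
  ultimately have D: "f x - f xs \<le> (\<Sum>i\<in>UNIV. g i * (x $ i - xs $ i))"
    by (simp add: exp)
  define M where "M = zeta f B lam x istar * \<bar>g istar\<bar>"
  define c where "c i = (if x $ i = 0 then \<bar>xs $ i\<bar> / lam else \<bar>x $ i\<bar> + \<bar>xs $ i\<bar>)" for i
  have zpos: "zeta f B lam x i \<ge> 0" for i using lam unfolding zeta_def by auto
  have Mpos: "M \<ge> 0" unfolding M_def using zpos by simp
  have termb: "g i * (x $ i - xs $ i) \<le> M * c i" for i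
  proof -
    have am: "zeta f B lam x i * \<bar>g i\<bar> \<le> M" using argmax[of i] unfolding M_def g_def by simp
    show ?thesis
    proof (cases "x $ i = 0")
      case True
      then have "lam * \<bar>g i\<bar> \<le> M" using am unfolding zeta_def by simp
      then have "\<bar>g i\<bar> \<le> M / lam" using lam by (simp add: le_divide_eq mult.commute)
      then have "\<bar>g i\<bar> * \<bar>xs $ i\<bar> \<le> M / lam * \<bar>xs $ i\<bar>" by (intro mult_right_mono) auto
      moreover have "g i * (x $ i - xs $ i) \<le> \<bar>g i\<bar> * \<bar>xs $ i\<bar>" using True
        by (simp add: abs_mult[symmetric])
      ultimately show ?thesis using True unfolding c_def by simp
    next
      case F: False
      show ?thesis
      proof (cases "\<bar>x $ i\<bar> \<ge> B \<and> g i * x $ i < 0")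
        case True
        have "- (g i * xs $ i) \<le> \<bar>g i\<bar> * \<bar>xs $ i\<bar>" by (simp add: abs_mult[symmetric])
        also have "\<dots> \<le> \<bar>g i\<bar> * \<bar>x $ i\<bar>" using True xsbox[of i] by (intro mult_left_mono) auto
        also have "\<dots> = - (g i * x $ i)" using True by (simp add: abs_mult[symmetric])
        finally have "g i * (x $ i - xs $ i) \<le> 0" by (simp add: algebra_simps)
        moreover have "M * c i \<ge> 0" using Mpos lam unfolding c_def by simp
        ultimately show ?thesis by linarith
      next
        case False
        then have "\<bar>g i\<bar> \<le> M" using am F unfolding zeta_def g_def by (simp split: if_splits)
        moreover have "g i * (x $ i - xs $ i) \<le> \<bar>g i\<bar> * (\<bar>x $ i\<bar> + \<bar>xs $ i\<bar>)"
        proof -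
          have "g i * (x $ i - xs $ i) \<le> \<bar>g i * (x $ i - xs $ i)\<bar>" by (rule abs_ge_self)
          also have "\<dots> = \<bar>g i\<bar> * \<bar>x $ i - xs $ i\<bar>" by (rule abs_mult)
          also have "\<dots> \<le> \<bar>g i\<bar> * (\<bar>x $ i\<bar> + \<bar>xs $ i\<bar>)"
            by (intro mult_left_mono abs_triangle_ineq4 abs_ge_zero)
          finally show ?thesis .
        qed
        moreover have "\<bar>g i\<bar> * (\<bar>x $ i\<bar> + \<bar>xs $ i\<bar>) \<le> M * (\<bar>x $ i\<bar> + \<bar>xs $ i\<bar>)"
          using calculation(1) by (intro mult_right_mono) auto
        ultimately show ?thesis using F unfolding c_def by simp
      qed
    qed
  qed
  have csum: "(\<Sum>i\<in>UNIV. c i) \<le> inverse lam * l1norm xs + l1norm x"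
  proof -
    have "c i \<le> inverse lam * \<bar>xs $ i\<bar> + \<bar>x $ i\<bar>" for i
    proof -
      have "\<bar>xs $ i\<bar> \<le> inverse lam * \<bar>xs $ i\<bar>"
        using lam by (simp add: mult_le_cancel_right1 one_le_inverse_iff) 
      then show ?thesis unfolding c_def by (auto simp: divide_inverse mult.commute)
    qed
    then have "(\<Sum>i\<in>UNIV. c i) \<le> (\<Sum>i\<in>UNIV. inverse lam * \<bar>xs $ i\<bar> + \<bar>x $ i\<bar>)"
      by (intro sum_mono) auto
    also have "\<dots> = inverse lam * l1norm xs + l1norm x"
      by (simp add: l1norm_def sum.distrib sum_distrib_left)
    finally show ?thesis .
  qed
  have DM: "f x - f xs \<le> M * (inverse lam * l1norm xs + l1norm x)"
  proof -
    have "f x - f xs \<le> (\<Sum>i\<in>UNIV. M * c i)" using D sum_mono[of UNIV _ "\<lambda>i. M * c i", OF termb] by linarith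
    also have "\<dots> = M * (\<Sum>i\<in>UNIV. c i)" by (simp add: sum_distrib_left)
    also have "\<dots> \<le> M * (inverse lam * l1norm xs + l1norm x)" using csum Mpos by (simp add: mult_left_mono)
    finally show ?thesis .
  qed
  have l1pos: "l1norm v \<ge> 0" for v unfolding l1norm_def by (simp add: sum_nonneg)
  have Epos: "inverse lam * l1norm xs + l1norm x \<ge> 0" using lam l1pos[of xs] l1pos[of x] by simp
  show ?thesis
  proof (cases "x $ istar = 0")
    case True
    then have "M = lam * \<bar>g istar\<bar>" unfolding M_def zeta_def by simp
    then have "f x - f xs \<le> \<bar>g istar\<bar> * (lam * (inverse lam * l1norm xs + l1norm x))"
      using DM by (simp add: mult_ac)
    also have "lam * (inverse lam * l1norm xs + l1norm x) = l1norm xs + lam * l1norm x"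
      using lam by (simp add: algebra_simps)
    finally have DD: "f x - f xs \<le> \<bar>g istar\<bar> * (l1norm xs + lam * l1norm x)" .
    have "0 \<le> l1norm xs + lam * l1norm x"
      using lam l1pos[of xs] l1pos[of x] by (intro add_nonneg_nonneg mult_nonneg_nonneg) auto
    then have "(f x - f xs) / (l1norm xs + lam * l1norm x) \<le> \<bar>g istar\<bar>"
      by (intro div_le_aux[OF DD] abs_ge_zero)
    then show ?thesis unfolding g_def by simp
  next
    case False
    have "zeta f B lam x istar \<le> 1" using lam unfolding zeta_def by auto
    then have "M \<le> \<bar>g istar\<bar>" unfolding M_def
      using mult_right_mono[of "zeta f B lam x istar" 1 "\<bar>g istar\<bar>"] by simp
    then have "M * (inverse lam * l1norm xs + l1norm x) \<le> \<bar>g istar\<bar> * (inverse lam * l1norm xs + l1norm x)"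
      using Epos by (rule mult_right_mono)
    then have DD2: "f x - f xs \<le> \<bar>g istar\<bar> * (inverse lam * l1norm xs + l1norm x)"
      using DM by linarith
    have "(f x - f xs) / (inverse lam * l1norm xs + l1norm x) \<le> \<bar>g istar\<bar>"
      by (intro div_le_aux[OF DD2] abs_ge_zero Epos)
    then show ?thesis using False unfolding g_def by simp
  qed
qed

end
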